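(* Let $H=(V,E)$ be a contextuality scenario with $|E|=m$ and $\max_{e\in E}|e|=d$. Then there is a rule $r$ on the bipartite Bell scenario $B_{2,m,d}$ (two players, each with $m$ measurements having $d$ outcomes each) such that $H$ is a conditional contextuality scenario of the game $(B_{2,m,d})_r$; i.e. $H$ has a $2$-partite conditional interpretation as a game on $B_{2,m,d}$.
   Context: A contextuality scenario is a hypergraph $H=(V,E)$ (finite $V$, $E$ a set of subsets of $V$) with $V=\bigcup_{e\in E}e$. A probabilistic model on $H$ is a function $p:V\to[0,1]$ with $\sum_{v\in e}p(v)=1$ for all $e\in E$; $\mathcal{G}(H)$ denotes the set of such models. For $W\subseteq V$, the induced sub-hypergraph is $H_W=(W,\{e\cap W:e\in E\})$. Conditional contextuality: given hypergraphs $H=(V,E)$ and $H'=(V',E')$, $H'$ is a conditional contextuality scenario of $H$ if there is an injection $\phi:V'\to V$ such that (i) for all $p\in\mathcal{G}(H)$, $p\circ\phi\in\mathcal{G}(H')$, and (ii) for all $p'\in\mathcal{G}(H')$ there exists $p\in\mathcal{G}(H)$ with $p\circ\phi=p'$. Foulis–Randall product: for hypergraphs $H_A=(V_A,E_A)$, $H_B=(V_B,E_B)$, let $E_{A\to B}=\{\bigcup_{a\in e_A}(\{a\}\times f(a)) : e_A\in E_A,\ f:e_A\to E_B\}$ and $E_{A\gets B}=\{\bigcup_{b\in e_B}(g(b)\times\{b\}) : e_B\in E_B,\ g:e_B\to E_A\}$; then $H_A\otimes H_B=(V_A\times V_B,\ E_{A\to B}\cup E_{A\gets B})$. Bipartite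 game: let $B_1=(V_1,E_1)$, $B_2=(V_2,E_2)$ be hypergraphs whose edges are pairwise disjoint and cover the vertex set, and $H=(V,E)=B_1\otimes B_2$. Edges of the form $e_1\times e_2$ with $e_i\in E_i$ are called questions; $Q_E$ is the set of questions. A rule is a function $r:Q_E\to\mathcal{P}(V)$ with $r(e)\subseteq e$ for all $e\in Q_E$. With $W_r=\bigcup_{e\in Q_E}r(e)$, the game on $H$ under rule $r$ is $H_r=H_{W_r}=(W_r,\{e\cap W_r:e\in E\})$. $B_{2,m,d}$ denotes $B\otimes B$ where $B$ is the hypergraph with vertex set $\{x|a: x\in\{1,\dots,m\},\ a\in\{1,\dots,d\}\}$ and the $m$ disjoint edges $\{x|a: a\in\{1,\dots,d\}\}$, $x=1,\dots,m$. A game on $B_{2,m,d}$ is $(B_{2,m,d})_r$ for some rule $r$. *)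

theory Defs
  imports Complex_Main
begin

type_synonym 'v hypergraph = "'v set \<times> 'v set set"

definition verts :: "'v hypergraph \<Rightarrow> 'v set" where
  "verts H = fst H"

definition edges :: "'v hypergraph \<Rightarrow> 'v set set" where
  "edges H = snd H"

definition ctx_scenario :: "'v hypergraph \<Rightarrow> bool" where
  "ctx_scenario H \<longleftrightarrow> finite (verts H) \<and> verts H = \<Union>(edges H)"

definition prob_model :: "'v hypergraph \<Rightarrow> ('v \<Rightarrow> real) \<Rightarrow> bool" where
  "prob_model H p \<longleftrightarrow> (\<forall>v\<in>verts H. 0 \<le> p v \<and> p v \<le> 1) \<and>
                       (\<forall>e\<in>edges H. (\<Sum>v\<in>e. p v) = 1)"

definition induced :: "'v hypergraph \<Rightarrow> 'v set \<Rightarrow> 'v hypergraph" where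
  "induced H W = (W, {e \<inter> W | e. e \<in> edges H})"

definition cond_ctx :: "'w hypergraph \<Rightarrow> 'v hypergraph \<Rightarrow> bool" where
  "cond_ctx H' H \<longleftrightarrow> (\<exists>\<phi> :: 'w \<Rightarrow> 'v.
      inj_on \<phi> (verts H') \<and> \<phi> ` verts H' \<subseteq> verts H \<and>
      (\<forall>p. prob_model H p \<longrightarrow> prob_model H' (p \<circ> \<phi>)) \<and>
      (\<forall>p'. prob_model H' p' \<longrightarrow>
         (\<exists>p. prob_model H p \<and> (\<forall>v\<in>verts H'. p (\<phi> v) = p' v))))"

definition edges_AB :: "'a hypergraph \<Rightarrow> 'b hypergraph \<Rightarrow> ('a \<times> 'b) set set" where
  "edges_AB HA HB = {(\<Union>a\<in>eA. {a} \<times> f a) | eA f.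
       eA \<in> edges HA \<and> (\<forall>a\<in>eA. f a \<in> edges HB)}"

definition edges_BA :: "'a hypergraph \<Rightarrow> 'b hypergraph \<Rightarrow> ('a \<times> 'b) set set" where
  "edges_BA HA HB = {(\<Union>b\<in>eB. g b \<times> {b}) | eB g.
       eB \<in> edges HB \<and> (\<forall>b\<in>eB. g b \<in> edges HA)}"

definition fr_prod :: "'a hypergraph \<Rightarrow> 'b hypergraph \<Rightarrow> ('a \<times> 'b) hypergraph" where
  "fr_prod HA HB = (verts HA \<times> verts HB, edges_AB HA HB \<union> edges_BA HA HB)"

definition questions :: "'a hypergraph \<Rightarrow> 'b hypergraph \<Rightarrow> ('a \<times> 'b) set set" where
  "questions B1 B2 = {e1 \<times> e2 | e1 e2. e1 \<in> edges B1 \<and> e2 \<in> edges B2}"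

definition is_rule :: "'a hypergraph \<Rightarrow> 'b hypergraph \<Rightarrow> (('a \<times> 'b) set \<Rightarrow> ('a \<times> 'b) set) \<Rightarrow> bool" where
  "is_rule B1 B2 r \<longleftrightarrow> (\<forall>e\<in>questions B1 B2. r e \<subseteq> e)"

definition rule_verts :: "'a hypergraph \<Rightarrow> 'b hypergraph \<Rightarrow> (('a \<times> 'b) set \<Rightarrow> ('a \<times> 'b) set) \<Rightarrow> ('a \<times> 'b) set" where
  "rule_verts B1 B2 r = (\<Union>e\<in>questions B1 B2. r e)"

definition game :: "'a hypergraph \<Rightarrow> 'b hypergraph \<Rightarrow> (('a \<times> 'b) set \<Rightarrow> ('a \<times> 'b) set) \<Rightarrow> ('a \<times> 'b) hypergraph" where
  "game B1 B2 r = induced (fr_prod B1 B2) (rule_verts B1 B2 r)"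

text \<open>Single-party hypergraph B: vertices x|a = (x,a), x \<in> {1..m}, a \<in> {1..d}.\<close>
definition party :: "nat \<Rightarrow> nat \<Rightarrow> (nat \<times> nat) hypergraph" where
  "party m d = ({1..m} \<times> {1..d}, {{x} \<times> {1..d} | x. x \<in> {1..m}})"

definition bell_game :: "nat \<Rightarrow> nat \<Rightarrow> (((nat \<times> nat) \<times> (nat \<times> nat)) set \<Rightarrow> ((nat \<times> nat) \<times> (nat \<times> nat)) set) \<Rightarrow> ((nat \<times> nat) \<times> (nat \<times> nat)) hypergraph" where
  "bell_game m d r = game (party m d) (party m d) r"

end

theory Submission
  imports Defs
begin

locale bsetup =
  fixes V :: "'v set" and m d :: nat and ed :: "nat \<Rightarrow> 'v set" and L :: "nat \<Rightarrow> 'v \<Rightarrow> nat"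
  assumes finV: "finite V"
    and ed_sub: "x \<in> {1..m} \<Longrightarrow> ed x \<subseteq> V"
    and cover: "v \<in> V \<Longrightarrow> \<exists>x\<in>{1..m}. v \<in> ed x"
    and L_inj: "x \<in> {1..m} \<Longrightarrow> inj_on (L x) (ed x)"
    and L_rng: "x \<in> {1..m} \<Longrightarrow> u \<in> ed x \<Longrightarrow> L x u \<in> {1..d}"
begin

definition XX :: "nat \<Rightarrow> (nat \<times> nat) set" where "XX x = {x} \<times> {1..d}"

definition compat where "compat x y u v \<longleftrightarrow> (u \<in> ed y \<or> v \<in> ed x \<longrightarrow> u = v)"

definition W :: "((nat \<times> nat) \<times> (nat \<times> nat)) set" where
  "W = {((x, L x u), (y, L y v)) | x y u v. x \<in> {1..m} \<and> y \<in> {1..m} \<and> u \<in> ed x \<and> v \<in> ed y \<and> compat x y u v}"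

lemma finW: "finite W"
proof -
  have "W \<subseteq> ({1..m} \<times> {1..d}) \<times> ({1..m} \<times> {1..d})" unfolding W_def using L_rng by blast
  then show ?thesis by (rule finite_subset) auto
qed

lemma fin_ed: "x \<in> {1..m} \<Longrightarrow> finite (ed x)" using ed_sub finV finite_subset by blast

lemma W_memI: "x \<in> {1..m} \<Longrightarrow> y \<in> {1..m} \<Longrightarrow> u \<in> ed x \<Longrightarrow> v \<in> ed y \<Longrightarrow> compat x y u v \<Longrightarrow> ((x, L x u), (y, L y v)) \<in> W"
  unfolding W_def by blast

lemma W_memE: assumes "((x, a), (y, b)) \<in> W"
  obtains u v where "x \<in> {1..m}" "y \<in> {1..m}" "u \<in> ed x" "v \<in> ed y" "compat x y u v" "a = L x u" "b = L y v"
  using assms unfolding W_def by blast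

lemma edges_party: "edges (party m d) = XX ` {1..m}"
  unfolding party_def edges_def XX_def by auto

lemma verts_party: "verts (party m d) = {1..m} \<times> {1..d}"
  unfolding party_def verts_def by auto

lemma questions_eq: "questions (party m d) (party m d) = {XX x \<times> XX y | x y. x \<in> {1..m} \<and> y \<in> {1..m}}"
proof (rule set_eqI, rule iffI)
  fix Q assume "Q \<in> questions (party m d) (party m d)"
  then obtain e1 e2 where "Q = e1 \<times> e2" "e1 \<in> XX ` {1..m}" "e2 \<in> XX ` {1..m}"
    unfolding questions_def edges_party by blast
  then obtain x y where "Q = XX x \<times> XX y" "x \<in> {1..m}" "y \<in> {1..m}" by blast
  then show "Q \<in> {XX x \<times> XX y | x y. x \<in> {1..m} \<and> y \<in> {1..m}}" by blast
next
  fix Q assume "Q \<in> {XX x \<times> XX y | x y. x \<in> {1..m} \<and> y \<in> {1..m}}"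
  then obtain x y where "Q = XX x \<times> XX y" "x \<in> {1..m}" "y \<in> {1..m}" by blast
  then show "Q \<in> questions (party m d) (party m d)"
    unfolding questions_def edges_party by blast
qed

definition rr where "rr Q = Q \<inter> W"

lemma is_rule: "is_rule (party m d) (party m d) rr"
  unfolding is_rule_def rr_def by auto

lemma rule_verts_eq: "rule_verts (party m d) (party m d) rr = W"
proof
  show "rule_verts (party m d) (party m d) rr \<subseteq> W" unfolding rule_verts_def rr_def by auto
  show "W \<subseteq> rule_verts (party m d) (party m d) rr"
  proof
    fix w assume w: "w \<in> W"
    then obtain x y u v where *: "x \<in> {1..m}" "y \<in> {1..m}" "u \<in> ed x" "v \<in> ed y" "w = ((x, L x u), (y, L y v))"
      unfolding W_def by blast
    then have "w \<in> XX x \<times> XX y" using L_rng unfolding XX_def by auto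
    moreover have "XX x \<times> XX y \<in> questions (party m d) (party m d)" using * questions_eq by auto
    ultimately show "w \<in> rule_verts (party m d) (party m d) rr" unfolding rule_verts_def rr_def using w by blast
  qed
qed

lemma game_verts: "verts (bell_game m d rr) = W"
  unfolding bell_game_def game_def induced_def verts_def using rule_verts_eq by simp

lemma game_edges: "edges (bell_game m d rr) = {e \<inter> W | e. e \<in> edges_AB (party m d) (party m d) \<union> edges_BA (party m d) (party m d)}"
  unfolding bell_game_def game_def induced_def using rule_verts_eq by (simp add: edges_def fr_prod_def)

lemma game_model: "prob_model (bell_game m d rr) p \<longleftrightarrow>
   (\<forall>w\<in>W. 0 \<le> p w \<and> p w \<le> 1) \<and>
   (\<forall>e \<in> edges_AB (party m d) (party m d) \<union> edges_BA (party m d) (party m d). sum p (e \<inter> W) = 1)"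
  unfolding prob_model_def game_verts game_edges by blast

lemma AB_mem: assumes "x \<in> {1..m}" "\<And>a. a \<in> XX x \<Longrightarrow> g a \<in> {1..m}"
  shows "(\<Union>a\<in>XX x. {a} \<times> XX (g a)) \<in> edges_AB (party m d) (party m d)"
  unfolding edges_AB_def edges_party
  by (rule CollectI, rule exI[of _ "XX x"], rule exI[of _ "\<lambda>a. XX (g a)"]) (use assms in auto)

lemma BA_mem: assumes "y \<in> {1..m}" "\<And>b. b \<in> XX y \<Longrightarrow> g b \<in> {1..m}"
  shows "(\<Union>b\<in>XX y. XX (g b) \<times> {b}) \<in> edges_BA (party m d) (party m d)"
  unfolding edges_BA_def edges_party
  by (rule CollectI, rule exI[of _ "XX y"], rule exI[of _ "\<lambda>b. XX (g b)"]) (use assms in auto)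

lemma AB_cases: assumes "e \<in> edges_AB (party m d) (party m d)"
  obtains x g where "x \<in> {1..m}" "\<And>a. a \<in> XX x \<Longrightarrow> g a \<in> {1..m}" "e = (\<Union>a\<in>XX x. {a} \<times> XX (g a))"
proof -
  from assms obtain eA f where eA: "eA \<in> XX ` {1..m}" "\<forall>a\<in>eA. f a \<in> XX ` {1..m}" "e = (\<Union>a\<in>eA. {a} \<times> f a)"
    unfolding edges_AB_def edges_party by blast
  then obtain x where x: "x \<in> {1..m}" "eA = XX x" by blast
  define g where "g a = (SOME y. y \<in> {1..m} \<and> f a = XX y)" for a
  have "g a \<in> {1..m} \<and> f a = XX (g a)" if "a \<in> XX x" for a
    unfolding g_def by (rule someI_ex) (use eA x that in blast)
  then show ?thesis using that[of x g] x eA by auto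
qed

lemma BA_cases: assumes "e \<in> edges_BA (party m d) (party m d)"
  obtains y g where "y \<in> {1..m}" "\<And>b. b \<in> XX y \<Longrightarrow> g b \<in> {1..m}" "e = (\<Union>b\<in>XX y. XX (g b) \<times> {b})"
proof -
  from assms obtain eB f where eB: "eB \<in> XX ` {1..m}" "\<forall>b\<in>eB. f b \<in> XX ` {1..m}" "e = (\<Union>b\<in>eB. f b \<times> {b})"
    unfolding edges_BA_def edges_party by blast
  then obtain y where y: "y \<in> {1..m}" "eB = XX y" by blast
  define g where "g b = (SOME x. x \<in> {1..m} \<and> f b = XX x)" for b
  have "g b \<in> {1..m} \<and> f b = XX (g b)" if "b \<in> XX y" for b
    unfolding g_def by (rule someI_ex) (use eB y that in blast)
  then show ?thesis using that[of y g] y eB by auto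
qed

lemma sum_cancel_lemma:
  fixes p :: "'a \<Rightarrow> real"
  assumes "finite A" "finite B" "finite C" "A \<inter> C = {}" "B \<inter> C = {}"
    "sum p (A \<union> C) = 1" "sum p (B \<union> C) = 1"
  shows "sum p A = sum p B"
  using assms by (simp add: sum.union_disjoint)

lemma nosig_A:
  assumes pm: "prob_model (bell_game m d rr) p" and xy: "x \<in> {1..m}" "y \<in> {1..m}" "y' \<in> {1..m}"
    and al: "\<alpha> \<in> {1..d}"
  shows "sum p (({(x,\<alpha>)} \<times> XX y) \<inter> W) = sum p (({(x,\<alpha>)} \<times> XX y') \<inter> W)"
proof -
  have sums: "\<And>e. e \<in> edges_AB (party m d) (party m d) \<Longrightarrow> sum p (e \<inter> W) = 1"
    using pm unfolding game_model by blast
  define g where "g a = (if a = (x,\<alpha>) then y else y')" for a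
  define C where "C = ((XX x - {(x,\<alpha>)}) \<times> XX y') \<inter> W"
  have e1: "(\<Union>a\<in>XX x. {a} \<times> XX (g a)) \<in> edges_AB (party m d) (party m d)"
    by (rule AB_mem) (use xy in \<open>auto simp: g_def\<close>)
  have e2: "(\<Union>a\<in>XX x. {a} \<times> XX ((\<lambda>_. y') a)) \<in> edges_AB (party m d) (party m d)"
    by (rule AB_mem) (use xy in \<open>auto\<close>)
  have inx: "(x,\<alpha>) \<in> XX x" using al by (simp add: XX_def)
  have "(\<Union>a\<in>XX x. {a} \<times> XX (g a)) \<inter> W = (({(x,\<alpha>)} \<times> XX y) \<inter> W) \<union> C"
    using inx unfolding C_def g_def by (auto split: if_splits)
  moreover have "(\<Union>a\<in>XX x. {a} \<times> XX ((\<lambda>_. y') a)) \<inter> W = (({(x,\<alpha>)} \<times> XX y') \<inter> W) \<union> C"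
    using inx unfolding C_def by auto
  ultimately show ?thesis
    using sums[OF e1] sums[OF e2] finW
    by (intro sum_cancel_lemma[where C = C]) (auto simp: C_def)
qed

lemma nosig_B:
  assumes pm: "prob_model (bell_game m d rr) p" and xy: "y \<in> {1..m}" "x \<in> {1..m}" "x' \<in> {1..m}"
    and al: "\<beta> \<in> {1..d}"
  shows "sum p ((XX x \<times> {(y,\<beta>)}) \<inter> W) = sum p ((XX x' \<times> {(y,\<beta>)}) \<inter> W)"
proof -
  have sums: "\<And>e. e \<in> edges_BA (party m d) (party m d) \<Longrightarrow> sum p (e \<inter> W) = 1"
    using pm unfolding game_model by blast
  define g where "g b = (if b = (y,\<beta>) then x else x')" for b
  define C where "C = (XX x' \<times> (XX y - {(y,\<beta>)})) \<inter> W"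
  have e1: "(\<Union>b\<in>XX y. XX (g b) \<times> {b}) \<in> edges_BA (party m d) (party m d)"
    by (rule BA_mem) (use xy in \<open>auto simp: g_def\<close>)
  have e2: "(\<Union>b\<in>XX y. XX ((\<lambda>_. x') b) \<times> {b}) \<in> edges_BA (party m d) (party m d)"
    by (rule BA_mem) (use xy in \<open>auto\<close>)
  have iny: "(y,\<beta>) \<in> XX y" using al by (simp add: XX_def)
  have "(\<Union>b\<in>XX y. XX (g b) \<times> {b}) \<inter> W = ((XX x \<times> {(y,\<beta>)}) \<inter> W) \<union> C"
    using iny unfolding C_def g_def by (auto split: if_splits)
  moreover have "(\<Union>b\<in>XX y. XX ((\<lambda>_. x') b) \<times> {b}) \<inter> W = ((XX x' \<times> {(y,\<beta>)}) \<inter> W) \<union> C"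
    using iny unfolding C_def by auto
  ultimately show ?thesis
    using sums[OF e1] sums[OF e2] finW
    by (intro sum_cancel_lemma[where C = C]) (auto simp: C_def)
qed

definition diag where "diag x v = ((x, L x v), (x, L x v))"
definition mix where "mix x c v = ((x, L x v), (c, L c v))"

lemma S1: assumes "x \<in> {1..m}" "v \<in> ed x"
  shows "({(x, L x v)} \<times> XX x) \<inter> W = {diag x v}"
proof
  show "{diag x v} \<subseteq> ({(x, L x v)} \<times> XX x) \<inter> W"
    using assms W_memI[of x x v v] L_rng by (auto simp: diag_def XX_def compat_def)
  show "({(x, L x v)} \<times> XX x) \<inter> W \<subseteq> {diag x v}"
  proof
    fix w assume w: "w \<in> ({(x, L x v)} \<times> XX x) \<inter> W"
    then obtain b where wb: "w = ((x, L x v), (x, b))" by (auto simp: XX_def)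
    with w obtain u u' where "u \<in> ed x" "u' \<in> ed x" "compat x x u u'" "L x v = L x u" "b = L x u'"
      by (auto elim: W_memE)
    then show "w \<in> {diag x v}" using wb L_inj[OF assms(1)] assms
      by (auto simp: compat_def diag_def dest: inj_onD)
  qed
qed

lemma S2: assumes "x \<in> {1..m}" "c \<in> {1..m}" "v \<in> ed x" "v \<in> ed c"
  shows "({(x, L x v)} \<times> XX c) \<inter> W = {mix x c v}"
proof
  show "{mix x c v} \<subseteq> ({(x, L x v)} \<times> XX c) \<inter> W"
    using assms W_memI[of x c v v] L_rng by (auto simp: mix_def XX_def compat_def)
  show "({(x, L x v)} \<times> XX c) \<inter> W \<subseteq> {mix x c v}"
  proof
    fix w assume w: "w \<in> ({(x, L x v)} \<times> XX c) \<inter> W"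
    then obtain b where wb: "w = ((x, L x v), (c, b))" by (auto simp: XX_def)
    with w obtain u u' where "u \<in> ed x" "u' \<in> ed c" "compat x c u u'" "L x v = L x u" "b = L c u'"
      by (auto elim: W_memE)
    then show "w \<in> {mix x c v}" using wb L_inj[OF assms(1)] assms
      by (auto simp: compat_def mix_def dest: inj_onD)
  qed
qed

lemma S3: assumes "x \<in> {1..m}" "c \<in> {1..m}" "v \<in> ed x" "v \<in> ed c"
  shows "(XX x \<times> {(c, L c v)}) \<inter> W = {mix x c v}"
proof
  show "{mix x c v} \<subseteq> (XX x \<times> {(c, L c v)}) \<inter> W"
    using assms W_memI[of x c v v] L_rng by (auto simp: mix_def XX_def compat_def)
  show "(XX x \<times> {(c, L c v)}) \<inter> W \<subseteq> {mix x c v}"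
  proof
    fix w assume w: "w \<in> (XX x \<times> {(c, L c v)}) \<inter> W"
    then obtain b where wb: "w = ((x, b), (c, L c v))" by (auto simp: XX_def)
    with w obtain u u' where "u \<in> ed x" "u' \<in> ed c" "compat x c u u'" "b = L x u" "L c v = L c u'"
      by (auto elim: W_memE)
    then show "w \<in> {mix x c v}" using wb L_inj[OF assms(2)] assms
      by (auto simp: compat_def mix_def dest: inj_onD)
  qed
qed

lemma S4: assumes "c \<in> {1..m}" "v \<in> ed c"
  shows "(XX c \<times> {(c, L c v)}) \<inter> W = {diag c v}"
  using S3[OF assms(1) assms(1) assms(2) assms(2)] by (simp add: mix_def diag_def)

definition cc where "cc v = (SOME x. x \<in> {1..m} \<and> v \<in> ed x)"

lemma cc: "v \<in> V \<Longrightarrow> cc v \<in> {1..m} \<and> v \<in> ed (cc v)"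
  unfolding cc_def by (rule someI_ex) (use cover in blast)

definition phi where "phi v = diag (cc v) v"

lemma phi_W: "v \<in> V \<Longrightarrow> phi v \<in> W"
  using cc[of v] W_memI[of "cc v" "cc v" v v] by (auto simp: phi_def diag_def compat_def)

lemma phi_inj: "inj_on phi V"
proof
  fix u v assume uv: "u \<in> V" "v \<in> V" "phi u = phi v"
  then have "cc u = cc v" "L (cc v) u = L (cc v) v" by (auto simp: phi_def diag_def)
  then show "u = v" using cc[OF uv(1)] cc[OF uv(2)] L_inj by (metis inj_onD)
qed

lemma dir1:
  assumes pm: "prob_model (bell_game m d rr) p" and x: "x \<in> {1..m}"
  shows "sum (p \<circ> phi) (ed x) = 1"
proof -
  have pd: "p (diag x v) = p (phi v)" if v: "v \<in> ed x" for v
  proof -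
    have vV: "v \<in> V" using ed_sub x v by blast
    define c where "c = cc v"
    have c: "c \<in> {1..m}" "v \<in> ed c" using cc[OF vV] by (auto simp: c_def)
    have Lx: "L x v \<in> {1..d}" "L c v \<in> {1..d}" using L_rng x v c by auto
    have "p (diag x v) = sum p (({(x, L x v)} \<times> XX x) \<inter> W)" using S1[OF x v] by simp
    also have "\<dots> = sum p (({(x, L x v)} \<times> XX c) \<inter> W)" by (rule nosig_A[OF pm x x c(1) Lx(1)])
    also have "\<dots> = sum p ((XX x \<times> {(c, L c v)}) \<inter> W)" using S2[OF x c(1) v c(2)] S3[OF x c(1) v c(2)] by simp
    also have "\<dots> = sum p ((XX c \<times> {(c, L c v)}) \<inter> W)" by (rule nosig_B[OF pm c(1) x c(1) Lx(2)])
    also have "\<dots> = p (diag c v)" using S4[OF c] by simp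
    finally show ?thesis by (simp add: phi_def c_def)
  qed
  have e: "XX x \<times> XX x \<in> edges_AB (party m d) (party m d)"
    using AB_mem[of x "\<lambda>_. x"] x by (simp add: Sigma_def)
  have "sum p ((XX x \<times> XX x) \<inter> W) = 1" using pm e unfolding game_model by blast
  moreover have "(XX x \<times> XX x) \<inter> W = diag x ` ed x"
  proof
    show "diag x ` ed x \<subseteq> (XX x \<times> XX x) \<inter> W"
      using W_memI[of x x] x L_rng by (auto simp: diag_def XX_def compat_def)
    show "(XX x \<times> XX x) \<inter> W \<subseteq> diag x ` ed x"
    proof
      fix w assume w: "w \<in> (XX x \<times> XX x) \<inter> W"
      then obtain a b where wb: "w = ((x, a), (x, b))" by (auto simp: XX_def)
      with w obtain u u' where "u \<in> ed x" "u' \<in> ed x" "compat x x u u'" "a = L x u" "b = L x u'"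
        by (auto elim: W_memE)
      then show "w \<in> diag x ` ed x" using wb by (auto simp: compat_def diag_def)
    qed
  qed
  moreover have "inj_on (diag x) (ed x)" using L_inj[OF x] by (auto simp: inj_on_def diag_def)
  ultimately have "sum (p \<circ> diag x) (ed x) = 1" by (simp add: sum.reindex)
  then show ?thesis using pd by (simp add: comp_def)
qed

context
  fixes q :: "'v \<Rightarrow> real"
  assumes qb: "\<And>v. v \<in> V \<Longrightarrow> 0 \<le> q v \<and> q v \<le> 1"
    and qs: "\<And>x. x \<in> {1..m} \<Longrightarrow> sum q (ed x) = 1"
begin

definition UU where "UU x a = inv_into (ed x) (L x) a"
definition ss where "ss x y = sum q (ed x \<inter> ed y)"
definition PP where "PP x y u v = (if u = v then q u else q u * q v / (1 - ss x y))"
definition pp where "pp w = (if w \<in> W then PP (fst (fst w)) (fst (snd w)) (UU (fst (fst w)) (snd (fst w))) (UU (fst (snd w)) (snd (snd w))) else 0)"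

lemma UU_L: "x \<in> {1..m} \<Longrightarrow> u \<in> ed x \<Longrightarrow> UU x (L x u) = u"
  unfolding UU_def using L_inj by (simp add: inv_into_f_f)

lemma pp_val: "x \<in> {1..m} \<Longrightarrow> y \<in> {1..m} \<Longrightarrow> u \<in> ed x \<Longrightarrow> v \<in> ed y \<Longrightarrow> compat x y u v \<Longrightarrow>
  pp ((x, L x u), (y, L y v)) = PP x y u v"
  using W_memI[of x y u v] by (simp add: pp_def UU_L)

lemma q_le: assumes "x \<in> {1..m}" "y \<in> {1..m}" "u \<in> ed x" "u \<notin> ed y"
  shows "q u \<le> 1 - ss x y"
proof -
  have f: "finite (ed x)" using fin_ed assms(1) .
  have nn: "\<And>w. w \<in> ed x \<Longrightarrow> 0 \<le> q w" using qb ed_sub assms(1) by blast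
  have "q u + ss x y = sum q (insert u (ed x \<inter> ed y))"
    unfolding ss_def using assms f by (simp add: sum.insert)
  also have "\<dots> \<le> sum q (ed x)" using f assms nn by (intro sum_mono2) auto
  finally show ?thesis using qs assms(1) by simp
qed

lemma PP_bounds: assumes "x \<in> {1..m}" "y \<in> {1..m}" "u \<in> ed x" "v \<in> ed y" "compat x y u v"
  shows "0 \<le> PP x y u v \<and> PP x y u v \<le> 1"
proof (cases "u = v")
  case True then show ?thesis using qb ed_sub assms by (auto simp: PP_def)
next
  case False
  then have nu: "u \<notin> ed y" using assms(5) by (auto simp: compat_def)
  have le: "q u \<le> 1 - ss x y" using q_le assms(1,2,3) nu .
  have qu: "0 \<le> q u" "q u \<le> 1" and qv: "0 \<le> q v" "q v \<le> 1" using qb ed_sub assms by blast+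
  have den: "0 \<le> 1 - ss x y" using le qu by linarith
  have "q u * q v \<le> 1 - ss x y" using le qu qv by (meson dual_order.trans mult_left_le)
  then have "q u * q v / (1 - ss x y) \<le> 1"
    using den by (cases "1 - ss x y = 0") (auto simp: divide_le_eq)
  moreover have "0 \<le> q u * q v / (1 - ss x y)" using qu qv den by simp
  ultimately show ?thesis using False by (simp add: PP_def)
qed

lemma pp_bounds: "w \<in> W \<Longrightarrow> 0 \<le> pp w \<and> pp w \<le> 1"
  by (auto simp: W_def pp_val PP_bounds simp del: pp_def)

lemma marg_A: assumes x: "x \<in> {1..m}" and y: "y \<in> {1..m}"
  shows "sum pp (({(x,\<alpha>)} \<times> XX y) \<inter> W) = (if \<alpha> \<in> L x ` ed x then q (UU x \<alpha>) else 0)"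
proof (cases "\<alpha> \<in> L x ` ed x")
  case False
  have "({(x,\<alpha>)} \<times> XX y) \<inter> W = {}"
  proof (rule ccontr)
    assume "({(x,\<alpha>)} \<times> XX y) \<inter> W \<noteq> {}"
    then obtain b where "((x,\<alpha>), (y, b)) \<in> W" by (auto simp: XX_def)
    then show False using False by (auto elim!: W_memE)
  qed
  then show ?thesis using False by simp
next
  case True
  then obtain u where u: "u \<in> ed x" "\<alpha> = L x u" by blast
  define S where "S = {v \<in> ed y. compat x y u v}"
  have set: "({(x,\<alpha>)} \<times> XX y) \<inter> W = (\<lambda>v. ((x, L x u), (y, L y v))) ` S"
  proof
    show "(\<lambda>v. ((x, L x u), (y, L y v))) ` S \<subseteq> ({(x,\<alpha>)} \<times> XX y) \<inter> W"
      using W_memI[of x y u] x y u L_rng by (auto simp: S_def XX_def)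
    show "({(x,\<alpha>)} \<times> XX y) \<inter> W \<subseteq> (\<lambda>v. ((x, L x u), (y, L y v))) ` S"
    proof
      fix w assume w: "w \<in> ({(x,\<alpha>)} \<times> XX y) \<inter> W"
      then obtain b where wb: "w = ((x, \<alpha>), (y, b))" by (auto simp: XX_def)
      with w obtain u1 v1 where "u1 \<in> ed x" "v1 \<in> ed y" "compat x y u1 v1" "\<alpha> = L x u1" "b = L y v1"
        by (auto elim: W_memE)
      moreover then have "u1 = u" using u L_inj[OF x] by (metis inj_onD)
      ultimately show "w \<in> (\<lambda>v. ((x, L x u), (y, L y v))) ` S" using wb u by (auto simp: S_def)
    qed
  qed
  have inj: "inj_on (\<lambda>v. ((x, L x u), (y, L y v))) S"
    using L_inj[OF y] by (auto simp: inj_on_def S_def)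
  have "sum pp (({(x,\<alpha>)} \<times> XX y) \<inter> W) = sum (\<lambda>v. PP x y u v) S"
    unfolding set sum.reindex[OF inj] comp_def
    by (rule sum.cong[OF refl], rule pp_val[OF x y]) (use u in \<open>auto simp: S_def\<close>)
  also have "\<dots> = q u"
  proof (cases "u \<in> ed y")
    case True
    then have "S = {u}" using u by (auto simp: S_def compat_def)
    then show ?thesis by (simp add: PP_def)
  next
    case False
    then have S: "S = ed y - ed x" using u by (auto simp: S_def compat_def)
    have fy: "finite (ed y)" using fin_ed y .
    have "sum (\<lambda>v. PP x y u v) S = sum (\<lambda>v. q u * q v / (1 - ss x y)) S"
      using False by (intro sum.cong) (auto simp: PP_def S)
    also have "\<dots> = q u * sum q S / (1 - ss x y)"
      by (simp add: sum_divide_distrib[symmetric] sum_distrib_left)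
    also have "sum q S = 1 - ss x y"
    proof -
      have "ed y - ed x = ed y - (ed x \<inter> ed y)" by blast
      then have "sum q S = sum q (ed y) - sum q (ed x \<inter> ed y)"
        unfolding S using fy by (simp add: sum_diff)
      then show ?thesis using qs[OF y] by (simp add: ss_def)
    qed
    also have "q u * (1 - ss x y) / (1 - ss x y) = q u"
    proof (cases "1 - ss x y = 0")
      case True
      have "q u \<le> 1 - ss x y" using q_le x y u(1) False .
      moreover have "0 \<le> q u" using qb ed_sub x u by blast
      ultimately show ?thesis using True by simp
    qed simp
    finally show ?thesis .
  qed
  finally show ?thesis using u True UU_L x by simp
qed

lemma marg_B: assumes x: "x \<in> {1..m}" and y: "y \<in> {1..m}"
  shows "sum pp ((XX x \<times> {(y,\<beta>)}) \<inter> W) = (if \<beta> \<in> L y ` ed y then q (UU y \<beta>) else 0)"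
proof (cases "\<beta> \<in> L y ` ed y")
  case False
  have "(XX x \<times> {(y,\<beta>)}) \<inter> W = {}"
  proof (rule ccontr)
    assume "(XX x \<times> {(y,\<beta>)}) \<inter> W \<noteq> {}"
    then obtain a where "((x,a), (y, \<beta>)) \<in> W" by (auto simp: XX_def)
    then show False using False by (auto elim!: W_memE)
  qed
  then show ?thesis using False by simp
next
  case True
  then obtain v where v: "v \<in> ed y" "\<beta> = L y v" by blast
  define S where "S = {u \<in> ed x. compat x y u v}"
  have set: "(XX x \<times> {(y,\<beta>)}) \<inter> W = (\<lambda>u. ((x, L x u), (y, L y v))) ` S"
  proof
    show "(\<lambda>u. ((x, L x u), (y, L y v))) ` S \<subseteq> (XX x \<times> {(y,\<beta>)}) \<inter> W"
      using W_memI[of x y _ v] x y v L_rng by (auto simp: S_def XX_def)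
    show "(XX x \<times> {(y,\<beta>)}) \<inter> W \<subseteq> (\<lambda>u. ((x, L x u), (y, L y v))) ` S"
    proof
      fix w assume w: "w \<in> (XX x \<times> {(y,\<beta>)}) \<inter> W"
      then obtain a where wb: "w = ((x, a), (y, \<beta>))" by (auto simp: XX_def)
      with w obtain u1 v1 where "u1 \<in> ed x" "v1 \<in> ed y" "compat x y u1 v1" "a = L x u1" "\<beta> = L y v1"
        by (auto elim: W_memE)
      moreover then have "v1 = v" using v L_inj[OF y] by (metis inj_onD)
      ultimately show "w \<in> (\<lambda>u. ((x, L x u), (y, L y v))) ` S" using wb v by (auto simp: S_def)
    qed
  qed
  have inj: "inj_on (\<lambda>u. ((x, L x u), (y, L y v))) S"
    using L_inj[OF x] by (auto simp: inj_on_def S_def)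
  have "sum pp ((XX x \<times> {(y,\<beta>)}) \<inter> W) = sum (\<lambda>u. PP x y u v) S"
    unfolding set sum.reindex[OF inj] comp_def
    by (rule sum.cong[OF refl], rule pp_val[OF x y]) (use v in \<open>auto simp: S_def\<close>)
  also have "\<dots> = q v"
  proof (cases "v \<in> ed x")
    case True
    then have "S = {v}" using v by (auto simp: S_def compat_def)
    then show ?thesis by (simp add: PP_def)
  next
    case False
    then have S: "S = ed x - ed y" using v by (auto simp: S_def compat_def)
    have fx: "finite (ed x)" using fin_ed x .
    have "sum (\<lambda>u. PP x y u v) S = sum (\<lambda>u. q v * q u / (1 - ss x y)) S"
      using False by (intro sum.cong) (auto simp: PP_def S mult.commute)
    also have "\<dots> = q v * sum q S / (1 - ss x y)"
      by (simp add: sum_divide_distrib[symmetric] sum_distrib_left)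
    also have "sum q S = 1 - ss x y"
    proof -
      have "ed x - ed y = ed x - (ed x \<inter> ed y)" by blast
      then have "sum q S = sum q (ed x) - sum q (ed x \<inter> ed y)"
        unfolding S using fx by (simp add: sum_diff)
      then show ?thesis using qs[OF x] by (simp add: ss_def)
    qed
    also have "q v * (1 - ss x y) / (1 - ss x y) = q v"
    proof (cases "1 - ss x y = 0")
      case True
      have "q v \<le> 1 - ss y x" using q_le y x v(1) False .
      moreover have "ss y x = ss x y" by (simp add: ss_def Int_commute)
      moreover have "0 \<le> q v" using qb ed_sub y v by blast
      ultimately show ?thesis using True by simp
    qed simp
    finally show ?thesis .
  qed
  finally show ?thesis using v True UU_L y by simp
qed

lemma total_A: assumes x: "x \<in> {1..m}"
  shows "(\<Sum>a\<in>XX x. (if snd a \<in> L x ` ed x then q (UU x (snd a)) else 0)) = 1"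
proof -
  have "(\<Sum>a\<in>XX x. (if snd a \<in> L x ` ed x then q (UU x (snd a)) else 0))
      = (\<Sum>\<alpha>\<in>{1..d}. (if \<alpha> \<in> L x ` ed x then q (UU x \<alpha>) else 0))"
  proof -
    have X: "XX x = Pair x ` {1..d}" by (auto simp: XX_def)
    have "inj_on (Pair x) {1..d}" by (simp add: inj_on_def)
    then show ?thesis by (rule sum.reindex_cong[where l="Pair x"]) (use X in auto)
  qed
  also have "\<dots> = (\<Sum>\<alpha>\<in>L x ` ed x. q (UU x \<alpha>))"
    using L_rng[OF x] by (simp add: sum.If_cases Int_absorb1 image_subset_iff)
  also have "\<dots> = (\<Sum>u\<in>ed x. q (UU x (L x u)))"
    using L_inj[OF x] by (simp add: sum.reindex)
  also have "\<dots> = sum q (ed x)" using UU_L x by simp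
  finally show ?thesis using qs x by simp
qed

lemma dir2: "prob_model (bell_game m d rr) pp"
  unfolding game_model
proof (intro conjI ballI)
  fix w assume "w \<in> W" then show "0 \<le> pp w" "pp w \<le> 1" using pp_bounds by auto
next
  fix e assume "e \<in> edges_AB (party m d) (party m d) \<union> edges_BA (party m d) (party m d)"
  then show "sum pp (e \<inter> W) = 1"
  proof
    assume "e \<in> edges_AB (party m d) (party m d)"
    then have "\<exists>x g. x \<in> {1..m} \<and> (\<forall>a\<in>XX x. g a \<in> {1..m}) \<and> e = (\<Union>a\<in>XX x. {a} \<times> XX (g a))"
      by (rule AB_cases) blast
    then obtain x g where x: "x \<in> {1..m}" and g0: "\<forall>a\<in>XX x. g a \<in> {1..m}"
      and e: "e = (\<Union>a\<in>XX x. {a} \<times> XX (g a))" by blast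
    have g: "\<And>a. a \<in> XX x \<Longrightarrow> g a \<in> {1..m}" using g0 by blast
    have "e \<inter> W = (\<Union>a\<in>XX x. ({a} \<times> XX (g a)) \<inter> W)" unfolding e by blast
    then have "sum pp (e \<inter> W) = (\<Sum>a\<in>XX x. sum pp (({a} \<times> XX (g a)) \<inter> W))"
      by (simp only:) (rule sum.UNION_disjoint, auto simp: XX_def intro: finite_subset[OF _ finW])
    also have "\<dots> = (\<Sum>a\<in>XX x. (if snd a \<in> L x ` ed x then q (UU x (snd a)) else 0))"
      using marg_A[OF x g] by (intro sum.cong) (auto simp: XX_def)
    finally show ?thesis using total_A[OF x] by simp
  next
    assume "e \<in> edges_BA (party m d) (party m d)"
    then have "\<exists>y g. y \<in> {1..m} \<and> (\<forall>b\<in>XX y. g b \<in> {1..m}) \<and> e = (\<Union>b\<in>XX y. XX (g b) \<times> {b})"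
      by (rule BA_cases) blast
    then obtain y g where y: "y \<in> {1..m}" and g0: "\<forall>b\<in>XX y. g b \<in> {1..m}"
      and e: "e = (\<Union>b\<in>XX y. XX (g b) \<times> {b})" by blast
    have g: "\<And>b. b \<in> XX y \<Longrightarrow> g b \<in> {1..m}" using g0 by blast
    have "e \<inter> W = (\<Union>b\<in>XX y. (XX (g b) \<times> {b}) \<inter> W)" unfolding e by blast
    then have "sum pp (e \<inter> W) = (\<Sum>b\<in>XX y. sum pp ((XX (g b) \<times> {b}) \<inter> W))"
      by (simp only:) (rule sum.UNION_disjoint, auto simp: XX_def intro: finite_subset[OF _ finW])
    also have "\<dots> = (\<Sum>b\<in>XX y. (if snd b \<in> L y ` ed y then q (UU y (snd b)) else 0))"
      using marg_B[OF g y] by (intro sum.cong) (auto simp: XX_def)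
    finally show ?thesis using total_A[OF y] by simp
  qed
qed

lemma pp_phi: "v \<in> V \<Longrightarrow> pp (phi v) = q v"
  using cc[of v] pp_val[of "cc v" "cc v" v v] by (simp add: phi_def diag_def compat_def PP_def del: pp_def)

end

end

theorem theorem4p1:
  fixes H :: "'v hypergraph"
  assumes "ctx_scenario H"
    and "edges H \<noteq> {}"
  shows "\<exists>r. is_rule (party (card (edges H)) (Max (card ` edges H)))
                     (party (card (edges H)) (Max (card ` edges H))) r \<and>
             cond_ctx H (bell_game (card (edges H)) (Max (card ` edges H)) r)"
proof -
  define V where "V = verts H"
  define E where "E = edges H"
  define m where "m = card E"
  define d where "d = Max (card ` E)"
  have finV: "finite V" and VE: "V = \<Union>E" using assms(1) by (auto simp: ctx_scenario_def V_def E_def)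
  have finE: "finite E" using finV VE by (meson Sup_upper finite_Pow_iff finite_subset subsetI PowI)
  obtain ed where ed: "bij_betw ed {1..m} E" using ex_bij_betw_nat_finite_1[OF finE] m_def by blast
  have "\<exists>f. f ` e \<subseteq> {1..d} \<and> inj_on f e" if e: "e \<in> E" for e
  proof -
    have fe: "finite e" using e VE finV by (meson Sup_upper finite_subset)
    have "card e \<le> d" unfolding d_def using finE e by (intro Max_ge) auto
    then show ?thesis using card_le_inj[OF fe, of "{1..d}"] by simp
  qed
  then obtain lab where lab: "\<And>e. e \<in> E \<Longrightarrow> lab e ` e \<subseteq> {1..d} \<and> inj_on (lab e) e" by metis
  define L where "L x = lab (ed x)" for x
  have edE: "x \<in> {1..m} \<Longrightarrow> ed x \<in> E" for x using ed by (auto simp: bij_betw_def)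
  have Eed: "E = ed ` {1..m}" using ed by (auto simp: bij_betw_def)
  interpret B: bsetup V m d ed L
  proof
    show "finite V" by (rule finV)
    show "x \<in> {1..m} \<Longrightarrow> ed x \<subseteq> V" for x using edE VE by blast
    show "v \<in> V \<Longrightarrow> \<exists>x\<in>{1..m}. v \<in> ed x" for v using VE Eed by blast
    show "x \<in> {1..m} \<Longrightarrow> inj_on (L x) (ed x)" for x using lab edE by (simp add: L_def)
    show "x \<in> {1..m} \<Longrightarrow> u \<in> ed x \<Longrightarrow> L x u \<in> {1..d}" for x u using lab edE unfolding L_def by blast
  qed
  have "cond_ctx H (bell_game m d B.rr)"
    unfolding cond_ctx_def
  proof (rule exI[of _ B.phi], intro conjI)
    show "inj_on B.phi (verts H)" using B.phi_inj by (simp add: V_def)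
    show "B.phi ` verts H \<subseteq> verts (bell_game m d B.rr)" using B.phi_W by (auto simp: B.game_verts V_def)
  next
    show "\<forall>p. prob_model (bell_game m d B.rr) p \<longrightarrow> prob_model H (p \<circ> B.phi)"
    proof (intro allI impI)
    fix p assume pm: "prob_model (bell_game m d B.rr) p"
    have "\<forall>w\<in>B.W. 0 \<le> p w \<and> p w \<le> 1" using pm unfolding B.game_model by blast
    then have "\<forall>v\<in>verts H. 0 \<le> (p \<circ> B.phi) v \<and> (p \<circ> B.phi) v \<le> 1"
      using B.phi_W by (auto simp: V_def)
    moreover have "\<forall>e\<in>edges H. sum (p \<circ> B.phi) e = 1"
      using B.dir1[OF pm] Eed by (auto simp: E_def[symmetric])
    ultimately show "prob_model H (p \<circ> B.phi)" by (simp add: prob_model_def)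
    qed
  next
    show "\<forall>q. prob_model H q \<longrightarrow> (\<exists>p. prob_model (bell_game m d B.rr) p \<and> (\<forall>v\<in>verts H. p (B.phi v) = q v))"
    proof (intro allI impI)
    fix q assume qm: "prob_model H q"
    have qb: "\<And>v. v \<in> V \<Longrightarrow> 0 \<le> q v \<and> q v \<le> 1" using qm by (simp add: prob_model_def V_def)
    have qs: "\<And>x. x \<in> {1..m} \<Longrightarrow> sum q (ed x) = 1" using qm edE by (simp add: prob_model_def E_def)
    show "\<exists>p. prob_model (bell_game m d B.rr) p \<and> (\<forall>v\<in>verts H. p (B.phi v) = q v)"
      using B.dir2[OF qb qs] B.pp_phi[OF qb qs] by (auto simp: V_def)
    qed
  qed
  then show ?thesis using B.is_rule unfolding m_def d_def E_def by blast
qed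

end
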